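(* Let $\kappa\ge2$, fix $\delta>0$ and let $\boldsymbol\gamma=(\gamma_1,\dots,\gamma_\kappa)$ satisfy $\frac12<\gamma_1\le\cdots\le\gamma_\kappa$. Let $\mathcal X_\kappa$ be the set of $\kappa$-admissible matrices with entries in $\{0,\pm1\}$ having exactly one nonzero entry in each column. For $D\in\mathcal X_\kappa$ with $m$ rows and $1\le i\le m$, let $I_i(D)$ be the set of indices of columns of $D$ whose nonzero entry is in row $i$, and $\Gamma_i(D)=\sum_{j\in I_i(D)}\gamma_j$. Then $$I(D,n,\boldsymbol\gamma,\delta)=\delta^{m-2\sum_{j=1}^{\kappa}\gamma_j}\prod_{i=1}^{m}\frac{1}{2\Gamma_i(D)-1}$$ for all $D\in\mathcal X_\kappa$ and all $n\ge1$.
   Context: A division $(\nu,\mu)$ of $\{1,\dots,\kappa\}$ consists of $1\le m\le\kappa-1$ and strictly increasing sequences $\nu_1<\dots<\nu_m$, $\mu_1<\dots<\mu_{\kappa-m}$ in $\{1,\dots,\kappa\}$ which are disjoint. Given a positive integer $q$, an $m\times\kappa$ integer matrix $D=(d_{ij})$ is $(\nu,\mu)$-admissible (with denominator $q$) if no column vanishes, the gcd of its entries is $1$, $d_{i\nu_j}=q\delta_{ij}$, and $d_{i\mu_j}=0$ whenever $\mu_j<\nu_i$; $D$ is $\kappa$-admissible if it is $(\nu,\mu)$-admissible for some division and some $q$. $V_n=\pi^{n/2}/\Gamma(\frac n2+1)$, $R_n(\delta)=(\delta/V_n)^{1/n}$, $\mathbf 1_{R_n(\delta)}(\mathbf x)=1$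 if $|\mathbf x|>R_n(\delta)$ and $0$ otherwise, and $$I(D,n,\boldsymbol\gamma,\delta)=V_n^{-2\sum_{j}\gamma_j}\int_{\mathbb R^n}\cdots\int_{\mathbb R^n}\prod_{j=1}^{\kappa}\Big|\sum_{i=1}^m\frac{d_{ij}}{q}\mathbf x_i\Big|^{-2\gamma_jn}\mathbf 1_{R_n(\delta)}\Big(\sum_{i=1}^m\frac{d_{ij}}{q}\mathbf x_i\Big)\,d\mathbf x_1\cdots d\mathbf x_m.$$ *)

theory Defs
  imports "HOL-Analysis.Analysis"
begin

text \<open>Matrices are functions \<open>nat \<Rightarrow> nat \<Rightarrow> int\<close>, rows indexed by \<open>{1..m}\<close>,
  columns by \<open>{1..\<kappa>}\<close> (1-based, as in the paper).\<close>

definition is_division :: "nat \<Rightarrow> nat \<Rightarrow> (nat \<Rightarrow> nat) \<Rightarrow> (nat \<Rightarrow> nat) \<Rightarrow> bool" where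
  "is_division \<kappa> m \<nu> \<mu> \<longleftrightarrow>
     1 \<le> m \<and> m \<le> \<kappa> - 1 \<and>
     \<nu> ` {1..m} \<subseteq> {1..\<kappa>} \<and> \<mu> ` {1..\<kappa>-m} \<subseteq> {1..\<kappa>} \<and>
     strict_mono_on {1..m} \<nu> \<and> strict_mono_on {1..\<kappa>-m} \<mu> \<and>
     \<nu> ` {1..m} \<inter> \<mu> ` {1..\<kappa>-m} = {}"

definition admissible ::
  "nat \<Rightarrow> nat \<Rightarrow> (nat \<Rightarrow> nat) \<Rightarrow> (nat \<Rightarrow> nat) \<Rightarrow> int \<Rightarrow> (nat \<Rightarrow> nat \<Rightarrow> int) \<Rightarrow> bool" where
  "admissible \<kappa> m \<nu> \<mu> q D \<longleftrightarrow>
     is_division \<kappa> m \<nu> \<mu> \<and> 0 < q \<and>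
     (\<forall>j\<in>{1..\<kappa>}. \<exists>i\<in>{1..m}. D i j \<noteq> 0) \<and>
     Gcd {D i j | i j. i \<in> {1..m} \<and> j \<in> {1..\<kappa>}} = 1 \<and>
     (\<forall>i\<in>{1..m}. \<forall>j\<in>{1..m}. D i (\<nu> j) = (if i = j then q else 0)) \<and>
     (\<forall>i\<in>{1..m}. \<forall>j\<in>{1..\<kappa>-m}. \<mu> j < \<nu> i \<longrightarrow> D i (\<mu> j) = 0)"

definition ball_vol :: "nat \<Rightarrow> real" where
  "ball_vol n = pi powr (real n / 2) / Gamma (real n / 2 + 1)"

definition radius :: "nat \<Rightarrow> real \<Rightarrow> real" where
  "radius n \<delta> = (\<delta> / ball_vol n) powr (1 / real n)"

definition outside_ind :: "real \<Rightarrow> 'a::real_normed_vector \<Rightarrow> real" where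
  "outside_ind R x = (if norm x > R then 1 else 0)"

text \<open>The integral \<open>I(D,n,\<gamma>,\<delta>)\<close> with \<open>n = CARD('n)\<close>, as a Lebesgue integral of a
  nonnegative function over \<open>(\<real>^n)^m\<close> (value in \<open>ennreal\<close>).\<close>
definition I_int ::
  "'n::finite itself \<Rightarrow> nat \<Rightarrow> nat \<Rightarrow> int \<Rightarrow> (nat \<Rightarrow> nat \<Rightarrow> int) \<Rightarrow> (nat \<Rightarrow> real) \<Rightarrow> real \<Rightarrow> ennreal" where
  "I_int TYPE('n) \<kappa> m q D \<gamma> \<delta> =
     ennreal (ball_vol CARD('n) powr (- 2 * (\<Sum>j\<in>{1..\<kappa>}. \<gamma> j))) *
     (\<integral>\<^sup>+ x. (\<Prod>j\<in>{1..\<kappa>}.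
        ennreal (norm (\<Sum>i\<in>{1..m}. (of_int (D i j) / of_int q) *\<^sub>R x i) powr (- 2 * \<gamma> j * real CARD('n))
                 * outside_ind (radius CARD('n) \<delta>) (\<Sum>i\<in>{1..m}. (of_int (D i j) / of_int q) *\<^sub>R x i)))
      \<partial>(PiM {1..m} (\<lambda>_. lborel :: (real^'n) measure)))"

end

theory Submission
  imports Defs
begin

lemma radial_pt:
  fixes a :: real and y :: "'a::euclidean_space"
  assumes "0 < R" "1 < a"
  shows "ennreal (norm y powr (-a) * (if norm y > R then 1 else 0)) =
    (\<integral>\<^sup>+ r. ennreal (a * r powr (-a-1)) * indicator {p. R < norm (fst p) \<and> norm (fst p) \<le> snd p} (y, r) \<partial>lborel)"
proof (cases "norm y > R")
  case True
  have ny: "norm y > 0" using True assms by linarith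
  have "((\<lambda>r. r powr (-a-1)) has_integral -(norm y powr (-a-1+1)) / (-a-1+1)) {norm y..}"
    by (rule has_integral_powr_to_inf) (use assms ny in auto)
  then have "((\<lambda>r. a * r powr (-a-1)) has_integral a * (-(norm y powr (-a-1+1)) / (-a-1+1))) {norm y..}"
    by (rule has_integral_mult_right)
  moreover have "a * (-(norm y powr (-a-1+1)) / (-a-1+1)) = norm y powr (-a)" using assms by simp
  ultimately have hi: "((\<lambda>r. a * r powr (-a-1)) has_integral norm y powr (-a)) {norm y..}" by simp
  have "(\<integral>\<^sup>+ r. ennreal (a * r powr (-a-1)) * indicator {norm y..} r \<partial>lborel) = ennreal (norm y powr (-a))"
    by (rule nn_integral_has_integral_lebesgue'[OF _ hi]) (use assms in auto)
  moreover have "indicator {p. R < norm (fst p) \<and> norm (fst p) \<le> snd p} (y, r) = (indicator {norm y..} r :: ennreal)" for r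
    using True by (auto simp: indicator_def)
  ultimately show ?thesis using True by simp
next
  case False
  then show ?thesis by (simp add: indicator_def)
qed

lemma radial_shell:
  fixes r R :: real
  assumes "0 < R"
  shows "emeasure lborel {y::'a::euclidean_space. R < norm y \<and> norm y \<le> r} =
     ennreal (if R \<le> r then unit_ball_vol DIM('a) * (r ^ DIM('a) - R ^ DIM('a)) else 0)"
proof (cases "R \<le> r")
  case True
  have eq: "{y::'a. R < norm y \<and> norm y \<le> r} = cball 0 r - cball 0 R" by auto
  have sub: "cball (0::'a) R \<subseteq> cball 0 r" using True by auto
  have "emeasure lborel (cball (0::'a) r - cball 0 R) = emeasure lborel (cball (0::'a) r) - emeasure lborel (cball (0::'a) R)"
    using sub emeasure_lborel_cball_finite[of "0::'a" R] by (intro emeasure_Diff) auto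
  also have "\<dots> = ennreal (unit_ball_vol DIM('a) * r ^ DIM('a)) - ennreal (unit_ball_vol DIM('a) * R ^ DIM('a))"
    using True assms by (simp add: emeasure_cball)
  also have "\<dots> = ennreal (unit_ball_vol DIM('a) * r ^ DIM('a) - unit_ball_vol DIM('a) * R ^ DIM('a))"
    by (rule ennreal_minus) (use assms in \<open>auto intro: mult_nonneg_nonneg\<close>)
  finally show ?thesis using True eq by (simp add: algebra_simps)
next
  case False
  then have e: "{y::'a. R < norm y \<and> norm y \<le> r} = {}" by auto
  show ?thesis using False by (simp only: e emeasure_empty) simp
qed

lemma radial_integral:
  fixes R a :: real
  assumes R: "0 < R" and an: "real DIM('a) < a"
  shows "(\<integral>\<^sup>+ y. ennreal (norm (y::'a::euclidean_space) powr (-a) * (if norm y > R then 1 else 0)) \<partial>lborel)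
     = ennreal (unit_ball_vol DIM('a) * R powr (real DIM('a) - a) * real DIM('a) / (a - real DIM('a)))"
proof -
  define n where "n = DIM('a)"
  define V where "V = unit_ball_vol DIM('a)"
  have n1: "1 \<le> real n" unfolding n_def using DIM_positive[where 'a='a] by (simp add: Suc_le_eq)
  have a1: "1 < a" using an n1 unfolding n_def by linarith
  have V0: "0 \<le> V" unfolding V_def by (intro less_imp_le unit_ball_vol_pos) simp
  define S where "S = {p::'a \<times> real. R < norm (fst p) \<and> norm (fst p) \<le> snd p}"
  have meas: "(\<lambda>(y, r). ennreal (a * r powr (-a-1)) * indicator S (y, r)) \<in> borel_measurable (lborel \<Otimes>\<^sub>M lborel)"
    unfolding S_def by measurable
  have "(\<integral>\<^sup>+ y. ennreal (norm (y::'a) powr (-a) * (if norm y > R then 1 else 0)) \<partial>lborel)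
      = (\<integral>\<^sup>+ y. (\<integral>\<^sup>+ r. ennreal (a * r powr (-a-1)) * indicator S (y, r) \<partial>lborel) \<partial>lborel)"
    unfolding S_def by (rule nn_integral_cong) (rule radial_pt[OF R a1])
  also have "\<dots> = (\<integral>\<^sup>+ r. (\<integral>\<^sup>+ y. ennreal (a * r powr (-a-1)) * indicator S (y, r) \<partial>lborel) \<partial>lborel)"
    using pair_sigma_finite.Fubini'[OF _ meas] by (metis lborel.sigma_finite_measure_axioms pair_sigma_finite.intro)
  also have "\<dots> = (\<integral>\<^sup>+ r. ennreal (a * r powr (-a-1)) * ennreal (if R \<le> r then V * (r ^ n - R ^ n) else 0) \<partial>lborel)"
  proof (rule nn_integral_cong)
    fix r :: real
    have "(\<integral>\<^sup>+ y. ennreal (a * r powr (-a-1)) * indicator S (y, r) \<partial>lborel) =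
          (\<integral>\<^sup>+ y. ennreal (a * r powr (-a-1)) * indicator {y::'a. R < norm y \<and> norm y \<le> r} y \<partial>lborel)"
      by (rule nn_integral_cong) (simp add: S_def indicator_def)
    also have "\<dots> = ennreal (a * r powr (-a-1)) * emeasure lborel {y::'a. R < norm y \<and> norm y \<le> r}"
      by (rule nn_integral_cmult_indicator) simp
    finally show "(\<integral>\<^sup>+ y. ennreal (a * r powr (-a-1)) * indicator S (y, r) \<partial>lborel) =
       ennreal (a * r powr (-a-1)) * ennreal (if R \<le> r then V * (r ^ n - R ^ n) else 0)"
      using radial_shell[OF R, where r=r, where 'a='a] unfolding V_def n_def by simp
  qed
  also have "\<dots> = (\<integral>\<^sup>+ r. ennreal (a * V * r powr (real n - a - 1) - a * V * R ^ n * r powr (-a-1)) * indicator {R..} r \<partial>lborel)"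
  proof (rule nn_integral_cong)
    fix r :: real
    show "ennreal (a * r powr (-a-1)) * ennreal (if R \<le> r then V * (r ^ n - R ^ n) else 0) =
      ennreal (a * V * r powr (real n - a - 1) - a * V * R ^ n * r powr (-a-1)) * indicator {R..} r"
    proof (cases "R \<le> r")
      case True
      then have r0: "0 < r" using R by linarith
      have "r powr (-a-1) * r ^ n = r powr (real n - a - 1)"
        using r0 by (simp add: powr_realpow[symmetric] powr_add[symmetric] algebra_simps)
      then have "a * r powr (-a-1) * (V * (r ^ n - R ^ n)) = a * V * r powr (real n - a - 1) - a * V * R ^ n * r powr (-a-1)"
        by (simp add: algebra_simps)
      moreover have "0 \<le> a * r powr (-a-1)" using a1 by simp
      ultimately show ?thesis using True by (simp add: ennreal_mult'[symmetric])
    qed simp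
  qed
  also have "\<dots> = ennreal (a * V * (-(R powr (real n - a - 1 + 1)) / (real n - a - 1 + 1)) - a * V * R ^ n * (-(R powr (-a-1+1)) / (-a-1+1)))"
  proof (rule nn_integral_has_integral_lebesgue')
    fix r assume "r \<in> {R..}"
    then have r: "R \<le> r" "0 < r" using R by auto
    have "R ^ n \<le> r ^ n" using r R by (simp add: power_mono)
    then have le: "a * V * R ^ n * r powr (-a-1) \<le> a * V * r ^ n * r powr (-a-1)"
      using a1 V0 by (intro mult_right_mono mult_left_mono) auto
    have eq: "r ^ n * r powr (-a-1) = r powr (real n - a - 1)"
      using r by (simp add: powr_realpow[symmetric] powr_add[symmetric] algebra_simps)
    have "a * V * r ^ n * r powr (-a-1) = a * V * r powr (real n - a - 1)"
      using eq by (metis mult.assoc)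
    then show "0 \<le> a * V * r powr (real n - a - 1) - a * V * R ^ n * r powr (-a-1)" using le by linarith
  next
    show "((\<lambda>r. a * V * r powr (real n - a - 1) - a * V * R ^ n * r powr (-a-1)) has_integral
      a * V * (-(R powr (real n - a - 1 + 1)) / (real n - a - 1 + 1)) - a * V * R ^ n * (-(R powr (-a-1+1)) / (-a-1+1))) {R..}"
      by (intro has_integral_diff has_integral_mult_right has_integral_powr_to_inf)
         (use R a1 an in \<open>auto simp: n_def\<close>)
  qed
  also have "a * V * (-(R powr (real n - a - 1 + 1)) / (real n - a - 1 + 1)) - a * V * R ^ n * (-(R powr (-a-1+1)) / (-a-1+1))
      = V * R powr (real n - a) * real n / (a - real n)"
  proof -
    have "R ^ n * R powr (-a) = R powr (real n - a)"
      using R by (simp add: powr_realpow[symmetric] powr_add[symmetric])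
    moreover have "a - real n \<noteq> 0" "a \<noteq> 0" using an a1 n_def by auto
    ultimately show ?thesis by (simp add: field_simps)
  qed
  finally show ?thesis unfolding V_def n_def .
qed

lemma aux_field:
  fixes V d Vp n e :: real
  assumes "Vp \<noteq> 0" "n \<noteq> 0" "e \<noteq> 0" "E = n * e"
  shows "V * (d / Vp) * n / E = V / Vp * d * (1 / e)"
  using assms by (simp add: field_simps)

lemma prod_F:
  fixes y :: "'a::real_normed_vector"
  assumes "finite A" "A \<noteq> {}" "0 \<le> R"
  shows "(\<Prod>j\<in>A. ennreal (norm y powr (- 2 * \<gamma> j * c) * outside_ind R y))
    = ennreal (norm y powr (- (2 * (\<Sum>j\<in>A. \<gamma> j) * c)) * outside_ind R y)"
proof (cases "norm y > R")
  case True
  then have y0: "norm y \<noteq> 0" using assms by linarith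
  have "(\<Prod>j\<in>A. ennreal (norm y powr (- 2 * \<gamma> j * c) * outside_ind R y))
      = ennreal (\<Prod>j\<in>A. norm y powr (- 2 * \<gamma> j * c))"
    using True by (simp add: outside_ind_def prod_ennreal)
  also have "(\<Prod>j\<in>A. norm y powr (- 2 * \<gamma> j * c)) = norm y powr (\<Sum>j\<in>A. - 2 * \<gamma> j * c)"
    using y0 by (simp add: powr_sum)
  also have "(\<Sum>j\<in>A. - 2 * \<gamma> j * c) = - (2 * (\<Sum>j\<in>A. \<gamma> j) * c)"
    by (simp add: sum_distrib_left sum_distrib_right sum_negf)
  finally show ?thesis using True by (simp add: outside_ind_def)
next
  case False
  obtain a where "a \<in> A" using assms by blast
  then have "(\<Prod>j\<in>A. ennreal (norm y powr (- 2 * \<gamma> j * c) * outside_ind R y)) = 0"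
    using False assms by (intro prod_zero) (auto simp: outside_ind_def)
  then show ?thesis using False by (simp add: outside_ind_def)
qed

theorem proposition6p1:
  fixes \<kappa> m :: nat and \<nu> \<mu> :: "nat \<Rightarrow> nat" and q :: int
    and D :: "nat \<Rightarrow> nat \<Rightarrow> int" and \<gamma> :: "nat \<Rightarrow> real" and \<delta> :: real
  assumes "2 \<le> \<kappa>" and "0 < \<delta>"
    and "1/2 < \<gamma> 1" and "\<And>i j. 1 \<le> i \<Longrightarrow> i \<le> j \<Longrightarrow> j \<le> \<kappa> \<Longrightarrow> \<gamma> i \<le> \<gamma> j"
    and "admissible \<kappa> m \<nu> \<mu> q D"
    and "\<And>i j. i \<in> {1..m} \<Longrightarrow> j \<in> {1..\<kappa>} \<Longrightarrow> D i j \<in> {0, 1, -1}"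
    and "\<And>j. j \<in> {1..\<kappa>} \<Longrightarrow> \<exists>!i. i \<in> {1..m} \<and> D i j \<noteq> 0"
  shows "I_int TYPE('n::finite) \<kappa> m q D \<gamma> \<delta> =
     ennreal (\<delta> powr (real m - 2 * (\<Sum>j\<in>{1..\<kappa>}. \<gamma> j)) *
       (\<Prod>i\<in>{1..m}. 1 / (2 * (\<Sum>j\<in>{j\<in>{1..\<kappa>}. D i j \<noteq> 0}. \<gamma> j) - 1)))"
proof -
  note adm = assms(5)[unfolded admissible_def is_division_def]
  from adm have m1: "1 \<le> m" and q0: "0 < q" and nu: "\<nu> ` {1..m} \<subseteq> {1..\<kappa>}"
    and dnu: "\<forall>i\<in>{1..m}. \<forall>j\<in>{1..m}. D i (\<nu> j) = (if i = j then q else 0)" by auto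
  have q1: "q = 1"
  proof -
    have "D 1 (\<nu> 1) = q" using dnu m1 by auto
    moreover have "\<nu> 1 \<in> {1..\<kappa>}" using nu m1 by (meson atLeastAtMost_iff image_subset_iff order_refl)
    ultimately have "q \<in> {0,1,-1}" using assms(6)[of 1 "\<nu> 1"] m1 by auto
    then show ?thesis using q0 by auto
  qed
  define row where "row j = (THE i. i \<in> {1..m} \<and> D i j \<noteq> 0)" for j
  have row: "row j \<in> {1..m}" "D (row j) j \<noteq> 0" if "j \<in> {1..\<kappa>}" for j
    using theI'[OF assms(7)[OF that]] unfolding row_def by auto
  have row_uniq: "i = row j" if "j \<in> {1..\<kappa>}" "i \<in> {1..m}" "D i j \<noteq> 0" for i j
    using assms(7)[OF that(1)] row[OF that(1)] that by blast
  define n where "n = CARD('n)"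
  define V where "V = ball_vol n"
  define R where "R = radius n \<delta>"
  define J where "J i = {j\<in>{1..\<kappa>}. D i j \<noteq> 0}" for i
  define G where "G i = (\<Sum>j\<in>J i. \<gamma> j)" for i
  define S where "S = (\<Sum>j\<in>{1..\<kappa>}. \<gamma> j)"
  have J_row: "J i = {j\<in>{1..\<kappa>}. row j = i}" if "i \<in> {1..m}" for i
    unfolding J_def using row row_uniq that by blast
  have gpos: "1/2 < \<gamma> j" if "j \<in> {1..\<kappa>}" for j
    using assms(3) assms(4)[of 1 j] that by force
  have Jne: "\<nu> i \<in> J i" if "i \<in> {1..m}" for i
  proof -
    have "\<nu> i \<in> {1..\<kappa>}" using nu that by blast
    then show ?thesis using dnu that q1 unfolding J_def by auto
  qed
  have G_gt: "1/2 < G i" if "i \<in> {1..m}" for i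
  proof -
    have "\<gamma> (\<nu> i) \<le> G i" unfolding G_def
      by (rule member_le_sum) (use Jne[OF that] in \<open>auto simp: J_def intro: less_imp_le[OF order.strict_trans[OF _ gpos]]\<close>)
    then show ?thesis using gpos[of "\<nu> i"] Jne[OF that] unfolding J_def by force
  qed
  have npos: "0 < n" unfolding n_def by simp
  have V_eq: "V = unit_ball_vol (real n)" unfolding V_def ball_vol_def unit_ball_vol_def by simp
  have Vpos: "0 < V" unfolding V_eq by simp
  have Rpos: "0 < R" unfolding R_def radius_def using assms(2) Vpos V_def by simp
  have norm_eq: "norm (\<Sum>i\<in>{1..m}. (of_int (D i j) / of_int q) *\<^sub>R x i) = norm (x (row j))"
    if j: "j \<in> {1..\<kappa>}" for x :: "nat \<Rightarrow> real^'n" and j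
  proof -
    have "(\<Sum>i\<in>{1..m}. (of_int (D i j) / of_int q) *\<^sub>R x i)
        = (of_int (D (row j) j) / of_int q) *\<^sub>R x (row j) + (\<Sum>i\<in>{1..m} - {row j}. (of_int (D i j) / of_int q) *\<^sub>R x i)"
      by (rule sum.remove) (use row[OF j] in auto)
    also have "(\<Sum>i\<in>{1..m} - {row j}. (of_int (D i j) / of_int q) *\<^sub>R x i) = 0"
      by (rule sum.neutral) (use row_uniq[OF j] in auto)
    finally have "(\<Sum>i\<in>{1..m}. (of_int (D i j) / of_int q) *\<^sub>R x i) = (of_int (D (row j) j)) *\<^sub>R x (row j)"
      using q1 by simp
    moreover have "\<bar>of_int (D (row j) j) :: real\<bar> = 1"
      using assms(6)[OF row(1)[OF j] j] row(2)[OF j] by auto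
    ultimately show ?thesis by simp
  qed
  define g where "g i y = ennreal (norm (y::real^'n) powr (- (2 * G i * real n)) * outside_ind R y)" for i y
  have integrand: "(\<Prod>j\<in>{1..\<kappa>}.
        ennreal (norm (\<Sum>i\<in>{1..m}. (of_int (D i j) / of_int q) *\<^sub>R x i) powr (- 2 * \<gamma> j * real CARD('n))
                 * outside_ind (radius CARD('n) \<delta>) (\<Sum>i\<in>{1..m}. (of_int (D i j) / of_int q) *\<^sub>R x i)))
      = (\<Prod>i\<in>{1..m}. g i (x i))" for x :: "nat \<Rightarrow> real^'n"
  proof -
    have "(\<Prod>j\<in>{1..\<kappa>}.
        ennreal (norm (\<Sum>i\<in>{1..m}. (of_int (D i j) / of_int q) *\<^sub>R x i) powr (- 2 * \<gamma> j * real CARD('n))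
                 * outside_ind (radius CARD('n) \<delta>) (\<Sum>i\<in>{1..m}. (of_int (D i j) / of_int q) *\<^sub>R x i)))
      = (\<Prod>j\<in>{1..\<kappa>}. ennreal (norm (x (row j)) powr (- 2 * \<gamma> j * real n) * outside_ind R (x (row j))))"
    proof (rule prod.cong)
      fix j assume j: "j \<in> {1..\<kappa>}"
      show "ennreal (norm (\<Sum>i\<in>{1..m}. (of_int (D i j) / of_int q) *\<^sub>R x i) powr (- 2 * \<gamma> j * real CARD('n))
                 * outside_ind (radius CARD('n) \<delta>) (\<Sum>i\<in>{1..m}. (of_int (D i j) / of_int q) *\<^sub>R x i))
         = ennreal (norm (x (row j)) powr (- 2 * \<gamma> j * real n) * outside_ind R (x (row j)))"
        unfolding outside_ind_def norm_eq[OF j] n_def R_def by (rule refl)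
    qed simp
    also have "\<dots> = (\<Prod>i\<in>{1..m}. \<Prod>j\<in>{j\<in>{1..\<kappa>}. row j = i}. ennreal (norm (x (row j)) powr (- 2 * \<gamma> j * real n) * outside_ind R (x (row j))))"
      by (rule prod.group[symmetric]) (use row in auto)
    also have "\<dots> = (\<Prod>i\<in>{1..m}. g i (x i))"
    proof (rule prod.cong)
      fix i assume i: "i \<in> {1..m}"
      have "(\<Prod>j\<in>{j\<in>{1..\<kappa>}. row j = i}. ennreal (norm (x (row j)) powr (- 2 * \<gamma> j * real n) * outside_ind R (x (row j))))
         = (\<Prod>j\<in>J i. ennreal (norm (x i) powr (- 2 * \<gamma> j * real n) * outside_ind R (x i)))"
        unfolding J_row[OF i] by (rule prod.cong) auto
      also have "\<dots> = g i (x i)" unfolding g_def G_def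
        by (rule prod_F) (use Jne[OF i] Rpos in \<open>auto simp: J_def\<close>)
      finally show "(\<Prod>j\<in>{j\<in>{1..\<kappa>}. row j = i}. ennreal (norm (x (row j)) powr (- 2 * \<gamma> j * real n) * outside_ind R (x (row j)))) = g i (x i)" .
    qed simp
    finally show ?thesis .
  qed
  define c where "c i = V powr (2 * G i) * \<delta> powr (1 - 2 * G i) * (1 / (2 * G i - 1))" for i
  have gint: "(\<integral>\<^sup>+ y. g i y \<partial>lborel) = ennreal (c i)" if i: "i \<in> {1..m}" for i
  proof -
    have an: "real DIM(real^'n) < 2 * G i * real n"
      using G_gt[OF i] npos by (simp add: n_def)
    have "(\<integral>\<^sup>+ y. g i y \<partial>lborel) = ennreal (unit_ball_vol DIM(real^'n) * R powr (real DIM(real^'n) - 2 * G i * real n) * real DIM(real^'n) / (2 * G i * real n - real DIM(real^'n)))"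
      unfolding g_def outside_ind_def by (rule radial_integral[OF Rpos an])
    also have "unit_ball_vol DIM(real^'n) * R powr (real DIM(real^'n) - 2 * G i * real n) * real DIM(real^'n) / (2 * G i * real n - real DIM(real^'n)) = c i"
    proof -
      have d: "DIM(real^'n) = n" by (simp add: n_def)
      have "R powr (real n - 2 * G i * real n) = (\<delta> / V) powr (1 - 2 * G i)"
      proof -
        have e: "1 / real n * (real n - 2 * G i * real n) = 1 - 2 * G i" using npos by (simp add: field_simps)
        show ?thesis unfolding R_def radius_def V_def[symmetric] powr_powr e ..
      qed
      also have "\<dots> = \<delta> powr (1 - 2 * G i) / V powr (1 - 2 * G i)"
        using assms(2) Vpos by (simp add: powr_divide)
      finally have Rp: "R powr (real n - 2 * G i * real n) = \<delta> powr (1 - 2 * G i) / V powr (1 - 2 * G i)" .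
      have Vp: "V / V powr (1 - 2 * G i) = V powr (2 * G i)"
      proof -
        have "V / V powr (1 - 2 * G i) = V powr 1 / V powr (1 - 2 * G i)" using Vpos by simp
        also have "\<dots> = V powr (1 - (1 - 2 * G i))" by (rule powr_diff[symmetric])
        finally show ?thesis by simp
      qed
      have ne: "2 * G i - 1 \<noteq> 0" "real n \<noteq> 0" using G_gt[OF i] npos by auto
      have "2 * G i * real n - real n = real n * (2 * G i - 1)" by (simp add: algebra_simps)
      moreover have "V powr (1 - 2 * G i) \<noteq> 0" using Vpos by simp
      ultimately show ?thesis unfolding d c_def V_eq[symmetric] Rp Vp[symmetric]
        using ne by (simp add: aux_field)
    qed
    finally show ?thesis .
  qed
  interpret P: product_sigma_finite "\<lambda>_::nat. lborel :: (real^'n) measure" by standard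
  have gmeas: "g i \<in> borel_measurable borel" for i
    unfolding g_def outside_ind_def by measurable
  have sumG: "(\<Sum>i\<in>{1..m}. G i) = S"
  proof -
    have "(\<Sum>i\<in>{1..m}. G i) = (\<Sum>i\<in>{1..m}. \<Sum>j\<in>{j\<in>{1..\<kappa>}. row j = i}. \<gamma> j)"
      unfolding G_def by (rule sum.cong) (simp_all add: J_row)
    also have "\<dots> = S" unfolding S_def by (rule sum.group) (use row in auto)
    finally show ?thesis .
  qed
  have cnn: "0 \<le> c i" if "i \<in> {1..m}" for i
    using G_gt[OF that] unfolding c_def by simp
  have "I_int TYPE('n::finite) \<kappa> m q D \<gamma> \<delta> = ennreal (V powr (- 2 * S)) * (\<integral>\<^sup>+ x. (\<Prod>i\<in>{1..m}. g i (x i)) \<partial>(PiM {1..m} (\<lambda>_. lborel :: (real^'n) measure)))"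
    unfolding I_int_def integrand V_def n_def S_def ..
  also have "\<dots> = ennreal (V powr (- 2 * S)) * (\<Prod>i\<in>{1..m}. ennreal (c i))"
  proof -
    have "(\<integral>\<^sup>+ x. (\<Prod>i\<in>{1..m}. g i (x i)) \<partial>(PiM {1..m} (\<lambda>_. lborel :: (real^'n) measure)))
        = (\<Prod>i\<in>{1..m}. integral\<^sup>N lborel (g i))"
      by (rule P.product_nn_integral_prod) (auto simp: gmeas)
    also have "\<dots> = (\<Prod>i\<in>{1..m}. ennreal (c i))"
      by (rule prod.cong) (auto simp: gint)
    finally show ?thesis by simp
  qed
  also have "\<dots> = ennreal (V powr (- 2 * S) * (\<Prod>i\<in>{1..m}. c i))"
  proof -
    have "(\<Prod>i\<in>{1..m}. ennreal (c i)) = ennreal (\<Prod>i\<in>{1..m}. c i)"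
      by (rule prod_ennreal) (rule cnn)
    then show ?thesis by (simp add: ennreal_mult')
  qed
  also have "V powr (- 2 * S) * (\<Prod>i\<in>{1..m}. c i) = \<delta> powr (real m - 2 * S) * (\<Prod>i\<in>{1..m}. 1 / (2 * G i - 1))"
  proof -
    have "(\<Prod>i\<in>{1..m}. c i) = (\<Prod>i\<in>{1..m}. V powr (2 * G i)) * (\<Prod>i\<in>{1..m}. \<delta> powr (1 - 2 * G i)) * (\<Prod>i\<in>{1..m}. 1 / (2 * G i - 1))"
      unfolding c_def by (simp only: prod.distrib)
    also have "(\<Prod>i\<in>{1..m}. V powr (2 * G i)) = V powr (2 * S)"
      using Vpos sumG by (simp add: powr_sum[symmetric] sum_distrib_left[symmetric])
    also have "(\<Prod>i\<in>{1..m}. \<delta> powr (1 - 2 * G i)) = \<delta> powr (real m - 2 * S)"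
      using assms(2) sumG by (simp add: powr_sum[symmetric] sum_subtractf sum_distrib_left[symmetric])
    finally have "(\<Prod>i\<in>{1..m}. c i) = V powr (2 * S) * \<delta> powr (real m - 2 * S) * (\<Prod>i\<in>{1..m}. 1 / (2 * G i - 1))" .
    moreover have "V powr (- 2 * S) * V powr (2 * S) = 1"
      using Vpos by (simp add: powr_add[symmetric])
    ultimately show ?thesis by (metis (no_types, lifting) mult.assoc mult_1)
  qed
  finally show ?thesis unfolding S_def G_def J_def .
qed

end
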